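(* Let $p^*\in[0,1]$ and let $o^{(1)},o^{(2)},\dots$ be i.i.d. binary observations with $\Pr[o^{(t)}=1]=p^*$. Fix $\beta\in(0,1]$ and an arbitrary initial estimate $\hat p^{(1)}\in[0,1]$, and define $\hat p^{(t+1)}=(1-\beta)\hat p^{(t)}+\beta\,[o^{(t)}=1]$. Then the expected first time $t$ at which $\hat p^{(t)}$ lies in the band $[p^*-\beta,\,p^*+\beta]$ is bounded by $O(\beta^{-2})$. Moreover, the number of updates required for this first visit is lower bounded by $\Omega(\beta^{-1})$ (in the worst case over the initial estimate).
   Context: This is the fixed-rate ("static") sparse exponential moving average (EMA) estimate of the probability of a single item in the stationary binary setting; $[\cdot]$ denotes the indicator. *)

theory Defs
  imports "HOL-Probability.Probability"
begin

text \<open>Observation space: an infinite i.i.d. stream of Bernoulli(p) observations.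
  The stream element at index t (0-based) is the observation o^(t+1); True means o = 1.\<close>
definition obs_space :: "real \<Rightarrow> bool stream measure" where
  "obs_space p = stream_space (measure_pmf (bernoulli_pmf p))"

text \<open>EMA estimate, 0-indexed: ema beta p0 w t is the estimate p-hat^(t+1);
  ema beta p0 w 0 = p-hat^(1) = p0, and
  p-hat^(t+2) = (1-beta) p-hat^(t+1) + beta [o^(t+1) = 1].\<close>
fun ema :: "real \<Rightarrow> real \<Rightarrow> bool stream \<Rightarrow> nat \<Rightarrow> real" where
  "ema \<beta> p0 \<omega> 0 = p0"
| "ema \<beta> p0 \<omega> (Suc t) = (1 - \<beta>) * ema \<beta> p0 \<omega> t + \<beta> * (if \<omega> !! t then 1 else 0)"

text \<open>First (1-based) time t with p-hat^(t) in [p - beta, p + beta]; infinity if never.\<close>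
definition hit_time :: "real \<Rightarrow> real \<Rightarrow> real \<Rightarrow> bool stream \<Rightarrow> ennreal" where
  "hit_time p \<beta> p0 \<omega> =
     (if \<exists>t. \<bar>ema \<beta> p0 \<omega> t - p\<bar> \<le> \<beta>
      then ennreal (real (Suc (LEAST t. \<bar>ema \<beta> p0 \<omega> t - p\<bar> \<le> \<beta>)))
      else \<infinity>)"

end

theory Submission
  imports Defs
begin

definition stp :: "real \<Rightarrow> real \<Rightarrow> bool \<Rightarrow> real" where
  "stp \<beta> x b = (1 - \<beta>) * x + \<beta> * (if b then 1 else 0)"

fun hh :: "real \<Rightarrow> real \<Rightarrow> nat \<Rightarrow> real \<Rightarrow> bool stream \<Rightarrow> ennreal" where
  "hh p \<beta> 0 x \<omega> = 0"
| "hh p \<beta> (Suc n) x \<omega> = (if \<bar>x - p\<bar> \<le> \<beta> then 1 else 1 + hh p \<beta> n (stp \<beta> x (shd \<omega>)) (stl \<omega>))"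

lemma ema_Suc': "ema \<beta> x \<omega> (Suc t) = ema \<beta> (stp \<beta> x (shd \<omega>)) (stl \<omega>) t"
proof (induction t arbitrary: x \<omega>)
  case 0
  then show ?case by (simp add: stp_def)
next
  case (Suc t)
  have "ema \<beta> x \<omega> (Suc (Suc t)) = (1 - \<beta>) * ema \<beta> x \<omega> (Suc t) + \<beta> * (if \<omega> !! Suc t then 1 else 0)"
    by simp
  also have "\<dots> = (1 - \<beta>) * ema \<beta> (stp \<beta> x (shd \<omega>)) (stl \<omega>) t + \<beta> * (if stl \<omega> !! t then 1 else 0)"
    using Suc by simp
  finally show ?case by simp
qed

lemma hh_full:
  assumes "\<forall>s<k. \<not> \<bar>ema \<beta> x \<omega> s - p\<bar> \<le> \<beta>"
  shows "hh p \<beta> (Suc k) x \<omega> = ennreal (real (Suc k))"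
  using assms
proof (induction k arbitrary: x \<omega>)
  case 0
  then show ?case by simp
next
  case (Suc k)
  have x: "\<not> \<bar>x - p\<bar> \<le> \<beta>" using Suc.prems[rule_format, of 0] by simp
  have "\<forall>s<k. \<not> \<bar>ema \<beta> (stp \<beta> x (shd \<omega>)) (stl \<omega>) s - p\<bar> \<le> \<beta>"
    using Suc.prems by (auto simp flip: ema_Suc')
  then have "hh p \<beta> (Suc k) (stp \<beta> x (shd \<omega>)) (stl \<omega>) = ennreal (real (Suc k))"
    using Suc.IH by blast
  moreover have "hh p \<beta> (Suc (Suc k)) x \<omega> = 1 + hh p \<beta> (Suc k) (stp \<beta> x (shd \<omega>)) (stl \<omega>)"
    using x by (simp only: hh.simps(2)[of _ _ "Suc k"] if_False)
  moreover have "ennreal (real (Suc (Suc k))) = ennreal 1 + ennreal (real (Suc k))"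
    by (subst ennreal_plus[symmetric]) auto
  moreover have "1 + ennreal (real (Suc k)) = ennreal (real (Suc (Suc k)))"
    using calculation(3) by simp
  ultimately show ?case by simp
qed

lemma hit_le_sup: "hit_time p \<beta> x \<omega> \<le> (SUP n. hh p \<beta> n x \<omega>)"
proof (cases "\<exists>t. \<bar>ema \<beta> x \<omega> t - p\<bar> \<le> \<beta>")
  case True
  define L where "L = (LEAST t. \<bar>ema \<beta> x \<omega> t - p\<bar> \<le> \<beta>)"
  have "\<forall>s<L. \<not> \<bar>ema \<beta> x \<omega> s - p\<bar> \<le> \<beta>" unfolding L_def using not_less_Least by blast
  then have "hh p \<beta> (Suc L) x \<omega> = ennreal (real (Suc L))" by (rule hh_full)
  then have "hit_time p \<beta> x \<omega> = hh p \<beta> (Suc L) x \<omega>"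
    using True unfolding hit_time_def L_def by simp
  then show ?thesis by (metis SUP_upper UNIV_I)
next
  case False
  have "ennreal (real (Suc k)) \<le> (SUP n. hh p \<beta> n x \<omega>)" for k
  proof -
    have "hh p \<beta> (Suc k) x \<omega> = ennreal (real (Suc k))" using False by (intro hh_full) blast
    then show ?thesis by (metis SUP_upper UNIV_I)
  qed
  have "of_nat k \<le> (SUP n. hh p \<beta> n x \<omega>)" for k
  proof -
    have "(of_nat k :: ennreal) \<le> ennreal (real (Suc k))"
      unfolding ennreal_of_nat_eq_real_of_nat by (intro ennreal_leI) simp
    then show ?thesis using \<open>\<And>k. ennreal (real (Suc k)) \<le> _\<close> by (rule order.trans)
  qed
  then have "(SUP k. of_nat k :: ennreal) \<le> (SUP n. hh p \<beta> n x \<omega>)"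
    by (intro SUP_least) blast
  moreover have "top = (SUP k. of_nat k :: ennreal)" by (rule ennreal_SUP_of_nat_eq_top[symmetric])
  ultimately have "top \<le> (SUP n. hh p \<beta> n x \<omega>)"
    by (metis ord_eq_le_trans)
  then have sup: "(SUP n. hh p \<beta> n x \<omega>) = \<infinity>"
    by (simp only: top_unique infinity_ennreal_def)
  have ht: "hit_time p \<beta> x \<omega> = \<infinity>" using False unfolding hit_time_def by simp
  show ?thesis unfolding sup ht by (rule order_refl)
qed


lemma hh_mono: "hh p \<beta> n x \<omega> \<le> hh p \<beta> (Suc n) x \<omega>"
proof (induction n arbitrary: x \<omega>)
  case 0
  then show ?case by simp
next
  case (Suc n)
  show ?case
  proof (cases "\<bar>x - p\<bar> \<le> \<beta>")
    case True
    then show ?thesis by (simp only: hh.simps(2)[of _ _ "Suc n"] hh.simps(2)[of _ _ n] if_True order_refl)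
  next
    case False
    have "hh p \<beta> (Suc n) x \<omega> = 1 + hh p \<beta> n (stp \<beta> x (shd \<omega>)) (stl \<omega>)"
      using False by simp
    moreover have "hh p \<beta> (Suc (Suc n)) x \<omega> = 1 + hh p \<beta> (Suc n) (stp \<beta> x (shd \<omega>)) (stl \<omega>)"
      using False by (simp only: hh.simps(2)[of _ _ "Suc n"] if_False)
    ultimately show ?thesis using Suc.IH by (simp add: add_left_mono)
  qed
qed

lemma hh_meas: "(\<lambda>\<omega>. hh p \<beta> n x \<omega>) \<in> borel_measurable (stream_space (measure_pmf (bernoulli_pmf q)))"
proof (induction n arbitrary: x)
  case 0
  then show ?case by simp
next
  case (Suc n)
  show ?case
  proof (cases "\<bar>x - p\<bar> \<le> \<beta>")
    case True
    then show ?thesis by simp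
  next
    case False
    have eq: "(\<lambda>\<omega>. hh p \<beta> (Suc n) x \<omega>) = (\<lambda>\<omega>. if shd \<omega> then 1 + hh p \<beta> n (stp \<beta> x True) (stl \<omega>)
                   else 1 + hh p \<beta> n (stp \<beta> x False) (stl \<omega>))"
      using False by (auto simp: fun_eq_iff)
    note [measurable] = Suc.IH[of "stp \<beta> x True"] Suc.IH[of "stp \<beta> x False"]
    show ?thesis unfolding eq by measurable
  qed
qed

lemma key_ineq:
  fixes p \<beta> x :: real
  assumes "0 \<le> p" "p \<le> 1" "0 < \<beta>" "\<beta> \<le> 1" "0 \<le> x" "x \<le> 1" "\<not> \<bar>x - p\<bar> \<le> \<beta>"
  shows "(1 + (1 + \<bar>stp \<beta> x True - p\<bar> / \<beta>^2)) * p + (1 + (1 + \<bar>stp \<beta> x False - p\<bar> / \<beta>^2)) * (1 - p)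
         \<le> 1 + \<bar>x - p\<bar> / \<beta>^2"
proof -
  have b2: "\<beta>^2 > 0" using assms by simp
  have E: "p * \<bar>stp \<beta> x True - p\<bar> + (1 - p) * \<bar>stp \<beta> x False - p\<bar> = (1 - \<beta>) * \<bar>x - p\<bar>"
  proof (cases "x > p")
    case True
    then have xb: "x - p > \<beta>" using assms by auto
    have "\<beta> * x \<le> \<beta>" using assms by (simp add: mult_left_le)
    then have f: "stp \<beta> x False - p \<ge> 0" using xb by (simp add: stp_def algebra_simps)
    have t: "stp \<beta> x True - p \<ge> 0" using f assms by (simp add: stp_def)
    show ?thesis using f t True by (simp add: stp_def algebra_simps)
  next
    case False
    then have xb: "p - x > \<beta>" using assms by auto
    have "\<beta> * (1 - x) \<le> \<beta>" using assms by (simp add: mult_left_le)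
    then have t: "stp \<beta> x True - p \<le> 0" using xb by (simp add: stp_def algebra_simps)
    have f: "stp \<beta> x False - p \<le> 0" using t assms by (simp add: stp_def)
    show ?thesis using f t False by (simp add: stp_def algebra_simps)
  qed
  have bb: "\<beta> * \<beta> \<le> \<beta> * \<bar>x - p\<bar>" using assms by (intro mult_left_mono) auto
  have "(1 + (1 + \<bar>stp \<beta> x True - p\<bar> / \<beta>^2)) * p + (1 + (1 + \<bar>stp \<beta> x False - p\<bar> / \<beta>^2)) * (1 - p)
        = 2 + (p * \<bar>stp \<beta> x True - p\<bar> + (1 - p) * \<bar>stp \<beta> x False - p\<bar>) / \<beta>^2"
    using b2 by (simp add: field_simps)
  also have "\<dots> = 2 + (1 - \<beta>) * \<bar>x - p\<bar> / \<beta>^2" using E by simp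
  also have "\<dots> \<le> 1 + \<bar>x - p\<bar> / \<beta>^2"
  proof -
    have "\<bar>x - p\<bar> / \<beta>^2 - (1 - \<beta>) * \<bar>x - p\<bar> / \<beta>^2 = \<bar>x - p\<bar> / \<beta>"
      using assms by (simp add: field_simps power2_eq_square)
    moreover have "\<bar>x - p\<bar> / \<beta> \<ge> 1" using assms by simp
    ultimately show ?thesis by linarith
  qed
  finally show ?thesis .
qed

lemma hh_bound:
  assumes "0 \<le> p" "p \<le> 1" "0 < \<beta>" "\<beta> \<le> 1"
  shows "0 \<le> x \<Longrightarrow> x \<le> 1 \<Longrightarrow> (\<integral>\<^sup>+\<omega>. hh p \<beta> n x \<omega> \<partial>obs_space p) \<le> ennreal (1 + \<bar>x - p\<bar> / \<beta>^2)"
proof (induction n arbitrary: x)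
  case 0
  then show ?case by simp
next
  case (Suc n)
  let ?M = "measure_pmf (bernoulli_pmf p)"
  have MP: "prob_space ?M" by (rule prob_space_measure_pmf)
  interpret S: prob_space "stream_space ?M" by (rule prob_space.prob_space_stream_space[OF MP])
  show ?case
  proof (cases "\<bar>x - p\<bar> \<le> \<beta>")
    case True
    then have "(\<integral>\<^sup>+\<omega>. hh p \<beta> (Suc n) x \<omega> \<partial>obs_space p) = 1"
      by (simp add: obs_space_def S.emeasure_space_1)
    also have "\<dots> \<le> ennreal (1 + \<bar>x - p\<bar> / \<beta>^2)" by (simp add: ennreal_ge_1)
    finally show ?thesis .
  next
    case False
    define I where "I y = (\<integral>\<^sup>+\<omega>. hh p \<beta> n y \<omega> \<partial>stream_space ?M)" for y
    have "(\<integral>\<^sup>+\<omega>. hh p \<beta> (Suc n) x \<omega> \<partial>obs_space p)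
        = (\<integral>\<^sup>+b. (\<integral>\<^sup>+X. hh p \<beta> (Suc n) x (b ## X) \<partial>stream_space ?M) \<partial>?M)"
      unfolding obs_space_def by (rule prob_space.nn_integral_stream_space[OF MP hh_meas])
    also have "\<dots> = (\<integral>\<^sup>+b. (\<integral>\<^sup>+X. 1 + hh p \<beta> n (stp \<beta> x b) X \<partial>stream_space ?M) \<partial>?M)"
      using False by simp
    also have "\<dots> = (\<integral>\<^sup>+b. 1 + I (stp \<beta> x b) \<partial>?M)"
      by (subst nn_integral_add) (auto simp: I_def hh_meas S.emeasure_space_1)
    also have "\<dots> = (1 + I (stp \<beta> x True)) * ennreal p + (1 + I (stp \<beta> x False)) * ennreal (1 - p)"
      using Suc.prems assms by simp
    also have "\<dots> \<le> ennreal (1 + (1 + \<bar>stp \<beta> x True - p\<bar> / \<beta>^2)) * ennreal p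
                   + ennreal (1 + (1 + \<bar>stp \<beta> x False - p\<bar> / \<beta>^2)) * ennreal (1 - p)"
    proof -
      have st: "0 \<le> stp \<beta> x b" "stp \<beta> x b \<le> 1" for b
      proof -
        have a: "0 \<le> (1 - \<beta>) * x" using Suc.prems assms by simp
        have c: "(1 - \<beta>) * x \<le> 1 - \<beta>" using Suc.prems assms by (simp add: mult_left_le)
        show "0 \<le> stp \<beta> x b" "stp \<beta> x b \<le> 1" using a c assms by (auto simp: stp_def)
      qed
      have "1 + I (stp \<beta> x b) \<le> ennreal (1 + (1 + \<bar>stp \<beta> x b - p\<bar> / \<beta>^2))" for b
      proof -
        have "I (stp \<beta> x b) \<le> ennreal (1 + \<bar>stp \<beta> x b - p\<bar> / \<beta>^2)"
          using Suc.IH[OF st] unfolding I_def obs_space_def .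
        then have "1 + I (stp \<beta> x b) \<le> ennreal 1 + ennreal (1 + \<bar>stp \<beta> x b - p\<bar> / \<beta>^2)"
          by (simp add: add_left_mono)
        also have "\<dots> = ennreal (1 + (1 + \<bar>stp \<beta> x b - p\<bar> / \<beta>^2))"
          by (subst ennreal_plus) auto
        finally show ?thesis .
      qed
      then show ?thesis by (intro add_mono mult_right_mono) auto
    qed
    also have "\<dots> = ennreal ((1 + (1 + \<bar>stp \<beta> x True - p\<bar> / \<beta>^2)) * p
                   + (1 + (1 + \<bar>stp \<beta> x False - p\<bar> / \<beta>^2)) * (1 - p))"
      using assms by (simp add: ennreal_plus ennreal_mult)
    also have "\<dots> \<le> ennreal (1 + \<bar>x - p\<bar> / \<beta>^2)"
      using key_ineq[OF assms Suc.prems False] by (rule ennreal_leI)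
    finally show ?thesis .
  qed
qed


lemma ema_range:
  assumes "0 \<le> \<beta>" "\<beta> \<le> 1" "0 \<le> p0" "p0 \<le> 1"
  shows "0 \<le> ema \<beta> p0 \<omega> t \<and> ema \<beta> p0 \<omega> t \<le> 1"
proof (induction t)
  case 0
  then show ?case using assms by simp
next
  case (Suc t)
  have a: "0 \<le> (1 - \<beta>) * ema \<beta> p0 \<omega> t" using Suc assms by simp
  have c: "(1 - \<beta>) * ema \<beta> p0 \<omega> t \<le> 1 - \<beta>" using Suc assms by (simp add: mult_left_le)
  show ?case using a c assms by auto
qed

lemma ema_drift:
  assumes "0 \<le> \<beta>" "\<beta> \<le> 1" "0 \<le> p0" "p0 \<le> 1"
  shows "\<bar>ema \<beta> p0 \<omega> t - p0\<bar> \<le> real t * \<beta>"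
proof (induction t)
  case 0
  then show ?case by simp
next
  case (Suc t)
  have r: "0 \<le> ema \<beta> p0 \<omega> t" "ema \<beta> p0 \<omega> t \<le> 1" using ema_range[OF assms] by auto
  have "ema \<beta> p0 \<omega> (Suc t) - ema \<beta> p0 \<omega> t = \<beta> * ((if \<omega> !! t then 1 else 0) - ema \<beta> p0 \<omega> t)"
    by (simp add: algebra_simps)
  moreover have "\<bar>(if \<omega> !! t then 1 else 0) - ema \<beta> p0 \<omega> t\<bar> \<le> 1" using r by auto
  ultimately have "\<bar>ema \<beta> p0 \<omega> (Suc t) - ema \<beta> p0 \<omega> t\<bar> \<le> \<beta>"
    using assms by (simp add: abs_mult mult_left_le)
  then show ?case using Suc by (simp add: algebra_simps)
qed

lemma lower:
  assumes "0 \<le> p" "p \<le> 1" "0 < \<beta>" "\<beta> \<le> 1" "p0 = (if p \<ge> 1/2 then 0 else 1)"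
  shows "ennreal ((1/2) / \<beta>) \<le> hit_time p \<beta> p0 \<omega>"
proof (cases "\<exists>t. \<bar>ema \<beta> p0 \<omega> t - p\<bar> \<le> \<beta>")
  case True
  define L where "L = (LEAST t. \<bar>ema \<beta> p0 \<omega> t - p\<bar> \<le> \<beta>)"
  have hL: "\<bar>ema \<beta> p0 \<omega> L - p\<bar> \<le> \<beta>" unfolding L_def using True by (rule LeastI_ex)
  have p0: "0 \<le> p0" "p0 \<le> 1" "\<bar>p0 - p\<bar> \<ge> 1/2" using assms by auto
  have "\<bar>ema \<beta> p0 \<omega> L - p0\<bar> \<le> real L * \<beta>" using ema_drift[of \<beta> p0] assms p0 by simp
  moreover have "\<bar>p0 - p\<bar> \<le> \<bar>ema \<beta> p0 \<omega> L - p0\<bar> + \<bar>ema \<beta> p0 \<omega> L - p\<bar>" by arith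
  ultimately have "1/2 \<le> real L * \<beta> + \<beta>" using hL p0 by linarith
  then have "1/2 \<le> real (Suc L) * \<beta>" by (simp add: algebra_simps)
  then have "(1/2) / \<beta> \<le> real (Suc L)" using assms by (simp add: divide_le_eq)
  then have "ennreal ((1/2) / \<beta>) \<le> ennreal (real (Suc L))" by (rule ennreal_leI)
  moreover have "hit_time p \<beta> p0 \<omega> = ennreal (real (Suc L))"
    using True unfolding hit_time_def L_def by (simp only: if_True)
  ultimately show ?thesis by simp
next
  case False
  then show ?thesis unfolding hit_time_def by simp
qed

lemma upper:
  assumes "0 \<le> p" "p \<le> 1" "0 < \<beta>" "\<beta> \<le> 1" "0 \<le> p0" "p0 \<le> 1"
  shows "(\<integral>\<^sup>+ \<omega>. hit_time p \<beta> p0 \<omega> \<partial>obs_space p) \<le> ennreal (2 / \<beta>^2)"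
proof -
  have "(\<integral>\<^sup>+ \<omega>. hit_time p \<beta> p0 \<omega> \<partial>obs_space p) \<le> (\<integral>\<^sup>+ \<omega>. (SUP n. hh p \<beta> n p0 \<omega>) \<partial>obs_space p)"
    by (intro nn_integral_mono hit_le_sup)
  also have "\<dots> = (SUP n. (\<integral>\<^sup>+ \<omega>. hh p \<beta> n p0 \<omega> \<partial>obs_space p))"
  proof (rule nn_integral_monotone_convergence_SUP)
    show "incseq (\<lambda>n. hh p \<beta> n p0)" by (intro incseq_SucI le_funI hh_mono)
    show "\<And>i. hh p \<beta> i p0 \<in> borel_measurable (obs_space p)"
      unfolding obs_space_def using hh_meas by blast
  qed
  also have "\<dots> \<le> ennreal (1 + \<bar>p0 - p\<bar> / \<beta>^2)"
    by (intro SUP_least hh_bound assms)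
  also have "\<dots> \<le> ennreal (2 / \<beta>^2)"
  proof (intro ennreal_leI)
    have b: "0 < \<beta>^2" "\<beta>^2 \<le> 1" using assms by (auto simp: power_le_one)
    have "\<bar>p0 - p\<bar> \<le> 1" using assms by auto
    then have "\<bar>p0 - p\<bar> / \<beta>^2 \<le> 1 / \<beta>^2" using b by (simp add: divide_right_mono)
    moreover have "1 \<le> 1 / \<beta>^2" using b by simp
    ultimately show "1 + \<bar>p0 - p\<bar> / \<beta>^2 \<le> 2 / \<beta>^2" by (simp add: field_simps)
  qed
  finally show ?thesis .
qed

theorem theorem1:
  shows "(\<exists>C>0. \<forall>p \<beta> p0. 0 \<le> p \<and> p \<le> 1 \<and> 0 < \<beta> \<and> \<beta> \<le> 1 \<and> 0 \<le> p0 \<and> p0 \<le> 1 \<longrightarrow>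
            (\<integral>\<^sup>+ \<omega>. hit_time p \<beta> p0 \<omega> \<partial>obs_space p) \<le> ennreal (C / \<beta>^2))
       \<and> (\<exists>c>0. \<forall>p \<beta>. 0 \<le> p \<and> p \<le> 1 \<and> 0 < \<beta> \<and> \<beta> \<le> 1 \<longrightarrow>
            (\<exists>p0. 0 \<le> p0 \<and> p0 \<le> 1 \<and>
               (AE \<omega> in obs_space p. ennreal (c / \<beta>) \<le> hit_time p \<beta> p0 \<omega>)))"
proof (intro conjI)
  show "\<exists>C>0. \<forall>p \<beta> p0. 0 \<le> p \<and> p \<le> 1 \<and> 0 < \<beta> \<and> \<beta> \<le> 1 \<and> 0 \<le> p0 \<and> p0 \<le> 1 \<longrightarrow>
            (\<integral>\<^sup>+ \<omega>. hit_time p \<beta> p0 \<omega> \<partial>obs_space p) \<le> ennreal (C / \<beta>^2)"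
    by (rule exI[of _ 2]) (auto intro: upper)
  show "\<exists>c>0. \<forall>p \<beta>. 0 \<le> p \<and> p \<le> 1 \<and> 0 < \<beta> \<and> \<beta> \<le> 1 \<longrightarrow>
            (\<exists>p0. 0 \<le> p0 \<and> p0 \<le> 1 \<and>
               (AE \<omega> in obs_space p. ennreal (c / \<beta>) \<le> hit_time p \<beta> p0 \<omega>))"
  proof (rule exI[of _ "1/2"], intro conjI allI impI)
    fix p \<beta> :: real
    assume h: "0 \<le> p \<and> p \<le> 1 \<and> 0 < \<beta> \<and> \<beta> \<le> 1"
    show "\<exists>p0. 0 \<le> p0 \<and> p0 \<le> 1 \<and> (AE \<omega> in obs_space p. ennreal ((1/2) / \<beta>) \<le> hit_time p \<beta> p0 \<omega>)"
      by (rule exI[of _ "if p \<ge> 1/2 then 0 else 1"]) (use h lower in auto)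
  qed simp
qed

end
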